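(* Let $\mathbb{E}$ be a finitely complete category, $\Sigma$ a fibrational class of split epimorphisms, and suppose $\mathbb{E}$ is a $\Sigma$-Mal'tsev category. Let $d_0,d_1\colon X_1\rightrightarrows X_0$, $s_0\colon X_0\to X_1$ ($d_0s_0=d_1s_0=1_{X_0}$) be a reflexive graph such that $(d_0,s_0)\in\Sigma$. Let $X_2=\{(u,v)\in X_1\times X_1: d_1u=d_0v\}$ be the pullback of $d_0$ along $d_1$ (the object of composable pairs), and let $\iota_1=(1_{X_1},s_0d_1)\colon X_1\to X_2$ and $\iota_2=(s_0d_0,1_{X_1})\colon X_1\to X_2$. Then there is at most one morphism $m\colon X_2\to X_1$ with $m\iota_1=1_{X_1}$ and $m\iota_2=1_{X_1}$, and whenever such an $m$ exists, it is the composition of an internal category structure on this reflexive graph. Consequently, on such a reflexive graph there is at most one structure of internal category.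
   Context: A split epimorphism is a pair $(f,s)$ with $fs=1$. A class $\Sigma$ of split epimorphisms is fibrational if it contains all split epimorphisms $(f,s)$ with $f$ invertible and is stable under pullback along any morphism. A pair of morphisms with common codomain $Z$ is jointly extremally epic if it factors jointly through no non-invertible monomorphism into $Z$. $\mathbb{E}$ is $\Sigma$-Mal'tsev if for every split epimorphism $(f,s)\colon X\rightleftarrows Y$ in $\Sigma$ and every split epimorphism $(g,t)$ with $g\colon Y'\to Y$, letting $X'=Y'\times_YX$, $s'=(1_{Y'},sg)$, $\bar t=(tf,1_X)$, the pair $(s',\bar t)$ is jointly extremally epic. *)

theory Defs
  imports Main
begin

text \<open>A category whose objects are all elements of type 'o and whose arrows are all
elements of type 'a.  cmp C g f is the composite g after f (meaningful when tgt f = src g).\<close>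

record ('o, 'a) category =
  src :: "'a \<Rightarrow> 'o"
  tgt :: "'a \<Rightarrow> 'o"
  idn :: "'o \<Rightarrow> 'a"
  cmp :: "'a \<Rightarrow> 'a \<Rightarrow> 'a"

definition hom :: "('o, 'a) category \<Rightarrow> 'a \<Rightarrow> 'o \<Rightarrow> 'o \<Rightarrow> bool" where
  "hom C f X Y \<longleftrightarrow> src C f = X \<and> tgt C f = Y"

definition is_category :: "('o, 'a) category \<Rightarrow> bool" where
  "is_category C \<longleftrightarrow>
     (\<forall>X. hom C (idn C X) X X) \<and>
     (\<forall>f g. tgt C f = src C g \<longrightarrow> hom C (cmp C g f) (src C f) (tgt C g)) \<and>
     (\<forall>f. cmp C f (idn C (src C f)) = f \<and> cmp C (idn C (tgt C f)) f = f) \<and>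
     (\<forall>f g h. tgt C f = src C g \<and> tgt C g = src C h \<longrightarrow>
        cmp C h (cmp C g f) = cmp C (cmp C h g) f)"

definition is_mono :: "('o, 'a) category \<Rightarrow> 'a \<Rightarrow> bool" where
  "is_mono C m \<longleftrightarrow> (\<forall>f g. tgt C f = src C m \<and> tgt C g = src C m \<and> src C f = src C g \<and>
      cmp C m f = cmp C m g \<longrightarrow> f = g)"

definition iso :: "('o, 'a) category \<Rightarrow> 'a \<Rightarrow> bool" where
  "iso C f \<longleftrightarrow> (\<exists>g. hom C g (tgt C f) (src C f) \<and>
      cmp C g f = idn C (src C f) \<and> cmp C f g = idn C (tgt C f))"

definition is_pullback :: "('o, 'a) category \<Rightarrow> 'a \<Rightarrow> 'a \<Rightarrow> 'o \<Rightarrow> 'a \<Rightarrow> 'a \<Rightarrow> bool" where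
  "is_pullback C f g P p1 p2 \<longleftrightarrow>
     tgt C f = tgt C g \<and> hom C p1 P (src C f) \<and> hom C p2 P (src C g) \<and>
     cmp C f p1 = cmp C g p2 \<and>
     (\<forall>x y. src C x = src C y \<and> tgt C x = src C f \<and> tgt C y = src C g \<and>
        cmp C f x = cmp C g y \<longrightarrow>
        (\<exists>!u. hom C u (src C x) P \<and> cmp C p1 u = x \<and> cmp C p2 u = y))"

definition terminal :: "('o, 'a) category \<Rightarrow> 'o \<Rightarrow> bool" where
  "terminal C T \<longleftrightarrow> (\<forall>X. \<exists>!t. hom C t X T)"

definition finitely_complete :: "('o, 'a) category \<Rightarrow> bool" where
  "finitely_complete C \<longleftrightarrow> (\<exists>T. terminal C T) \<and>
     (\<forall>f g. tgt C f = tgt C g \<longrightarrow> (\<exists>P p1 p2. is_pullback C f g P p1 p2))"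

definition split_epi :: "('o, 'a) category \<Rightarrow> 'a \<times> 'a \<Rightarrow> bool" where
  "split_epi C fs \<longleftrightarrow> (case fs of (f, s) \<Rightarrow>
     hom C s (tgt C f) (src C f) \<and> cmp C f s = idn C (tgt C f))"

definition fibrational :: "('o, 'a) category \<Rightarrow> ('a \<times> 'a) set \<Rightarrow> bool" where
  "fibrational C \<Sigma> \<longleftrightarrow>
     (\<forall>fs\<in>\<Sigma>. split_epi C fs) \<and>
     (\<forall>f s. split_epi C (f, s) \<and> iso C f \<longrightarrow> (f, s) \<in> \<Sigma>) \<and>
     (\<forall>f s g P p1 p2 s'. (f, s) \<in> \<Sigma> \<and> tgt C g = tgt C f \<and>
        is_pullback C g f P p1 p2 \<and>
        hom C s' (src C g) P \<and> cmp C p1 s' = idn C (src C g) \<and>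
        cmp C p2 s' = cmp C s g \<longrightarrow> (p1, s') \<in> \<Sigma>)"

definition jointly_extremally_epic :: "('o, 'a) category \<Rightarrow> 'a \<Rightarrow> 'a \<Rightarrow> bool" where
  "jointly_extremally_epic C a b \<longleftrightarrow> tgt C a = tgt C b \<and>
     (\<forall>m a' b'. is_mono C m \<and> tgt C m = tgt C a \<and>
        hom C a' (src C a) (src C m) \<and> hom C b' (src C b) (src C m) \<and>
        cmp C m a' = a \<and> cmp C m b' = b \<longrightarrow> iso C m)"

definition sigma_maltsev :: "('o, 'a) category \<Rightarrow> ('a \<times> 'a) set \<Rightarrow> bool" where
  "sigma_maltsev C \<Sigma> \<longleftrightarrow>
     (\<forall>f s g t P p1 p2 s' tb. (f, s) \<in> \<Sigma> \<and> split_epi C (g, t) \<and> tgt C g = tgt C f \<and>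
        is_pullback C g f P p1 p2 \<and>
        hom C s' (src C g) P \<and> cmp C p1 s' = idn C (src C g) \<and> cmp C p2 s' = cmp C s g \<and>
        hom C tb (src C f) P \<and> cmp C p1 tb = cmp C t f \<and> cmp C p2 tb = idn C (src C f)
        \<longrightarrow> jointly_extremally_epic C s' tb)"

definition reflexive_graph :: "('o, 'a) category \<Rightarrow> 'o \<Rightarrow> 'o \<Rightarrow> 'a \<Rightarrow> 'a \<Rightarrow> 'a \<Rightarrow> bool" where
  "reflexive_graph C X0 X1 d0 d1 s0 \<longleftrightarrow>
     hom C d0 X1 X0 \<and> hom C d1 X1 X0 \<and> hom C s0 X0 X1 \<and>
     cmp C d0 s0 = idn C X0 \<and> cmp C d1 s0 = idn C X0"

text \<open>Internal category structure with composition m : X2 -> X1 on the reflexive graph,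
  where X2 (projections pi1, pi2) is the pullback of d0 along d1, i.e. composable pairs
  (u,v) with d1 u = d0 v.  X3 is the object of composable triples, the pullback of
  pi1 along pi2 (q1 = (u,v), q2 = (v,w)); a = m x 1 and b = 1 x m.\<close>
definition internal_category ::
  "('o, 'a) category \<Rightarrow> 'o \<Rightarrow> 'o \<Rightarrow> 'a \<Rightarrow> 'a \<Rightarrow> 'a \<Rightarrow> 'o \<Rightarrow> 'a \<Rightarrow> 'a \<Rightarrow> 'a \<Rightarrow> bool" where
  "internal_category C X0 X1 d0 d1 s0 X2 pi1 pi2 m \<longleftrightarrow>
     reflexive_graph C X0 X1 d0 d1 s0 \<and> is_pullback C d1 d0 X2 pi1 pi2 \<and>
     hom C m X2 X1 \<and>
     cmp C d0 m = cmp C d0 pi1 \<and> cmp C d1 m = cmp C d1 pi2 \<and>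
     (\<forall>i. hom C i X1 X2 \<and> cmp C pi1 i = idn C X1 \<and> cmp C pi2 i = cmp C s0 d1
        \<longrightarrow> cmp C m i = idn C X1) \<and>
     (\<forall>i. hom C i X1 X2 \<and> cmp C pi1 i = cmp C s0 d0 \<and> cmp C pi2 i = idn C X1
        \<longrightarrow> cmp C m i = idn C X1) \<and>
     (\<forall>X3 q1 q2 a b. is_pullback C pi2 pi1 X3 q1 q2 \<and>
        hom C a X3 X2 \<and> cmp C pi1 a = cmp C m q1 \<and> cmp C pi2 a = cmp C pi2 q2 \<and>
        hom C b X3 X2 \<and> cmp C pi1 b = cmp C pi1 q1 \<and> cmp C pi2 b = cmp C m q2
        \<longrightarrow> cmp C m a = cmp C m b)"

end

theory Submission
  imports Defs
begin

lemma catI: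
  assumes "is_category C"
  shows cat_src_id: "src C (idn C X) = X" and cat_tgt_id: "tgt C (idn C X) = X"
    and cat_src_cmp: "tgt C f = src C g \<Longrightarrow> src C (cmp C g f) = src C f"
    and cat_tgt_cmp: "tgt C f = src C g \<Longrightarrow> tgt C (cmp C g f) = tgt C g"
    and cat_idr: "src C f = X \<Longrightarrow> cmp C f (idn C X) = f"
    and cat_idl: "tgt C f = Y \<Longrightarrow> cmp C (idn C Y) f = f"
    and cat_assoc: "tgt C f = src C g \<Longrightarrow> tgt C g = src C h \<Longrightarrow>
        cmp C h (cmp C g f) = cmp C (cmp C h g) f"
  using assms unfolding is_category_def hom_def by auto

lemma pb_props:
  assumes "is_pullback C f g P p1 p2"
  shows "tgt C f = tgt C g" "src C p1 = P" "tgt C p1 = src C f" "src C p2 = P"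
    "tgt C p2 = src C g" "cmp C f p1 = cmp C g p2"
  using assms unfolding is_pullback_def hom_def by auto

lemma pb_ex:
  assumes "is_pullback C f g P p1 p2" "src C x = src C y" "tgt C x = src C f"
    "tgt C y = src C g" "cmp C f x = cmp C g y"
  obtains u where "src C u = src C x" "tgt C u = P" "cmp C p1 u = x" "cmp C p2 u = y"
  using assms unfolding is_pullback_def hom_def by metis

lemma pb_uniq:
  assumes cat: "is_category C" and pb: "is_pullback C f g P p1 p2"
    and "src C u = X" "tgt C u = P" "src C v = X" "tgt C v = P"
    "cmp C p1 u = cmp C p1 v" "cmp C p2 u = cmp C p2 v"
  shows "u = v"
proof -
  note pp = pb_props[OF pb]
  let ?x = "cmp C p1 u" and ?y = "cmp C p2 u"
  have a: "src C ?x = src C ?y" "tgt C ?x = src C f" "tgt C ?y = src C g"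
    using assms pp by (simp_all add: cat_src_cmp[OF cat] cat_tgt_cmp[OF cat])
  have b: "cmp C f ?x = cmp C g ?y"
    using assms pp by (simp add: cat_assoc[OF cat])
  have "\<exists>!w. hom C w (src C ?x) P \<and> cmp C p1 w = ?x \<and> cmp C p2 w = ?y"
    using pb a b unfolding is_pullback_def by blast
  moreover have "hom C u (src C ?x) P" "hom C v (src C ?x) P"
    using assms pp by (simp_all add: hom_def cat_src_cmp[OF cat])
  ultimately show ?thesis using assms by metis
qed

lemma jee_cancel:
  assumes cat: "is_category C" and fc: "finitely_complete C"
    and jee: "jointly_extremally_epic C a b"
    and hf: "src C f = tgt C a" and hg: "src C g = tgt C a" and ht: "tgt C f = tgt C g"
    and ea: "cmp C f a = cmp C g a" and eb: "cmp C f b = cmp C g b"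
  shows "f = g"
proof -
  note cs = cat_src_id[OF cat] cat_tgt_id[OF cat] cat_src_cmp[OF cat] cat_tgt_cmp[OF cat]
  define Z where "Z = tgt C a"
  define Y where "Y = tgt C f"
  have tb: "tgt C b = Z" using jee Z_def unfolding jointly_extremally_epic_def by simp
  obtain T where T: "terminal C T" using fc unfolding finitely_complete_def by blast
  obtain tZ where tZ: "src C tZ = Z" "tgt C tZ = T" using T unfolding terminal_def hom_def by blast
  obtain tY where tY: "src C tY = Y" "tgt C tY = T" using T unfolding terminal_def hom_def by blast
  have termu: "\<And>u v X. src C u = X \<Longrightarrow> tgt C u = T \<Longrightarrow> src C v = X \<Longrightarrow> tgt C v = T \<Longrightarrow> u = v"
    using T unfolding terminal_def hom_def by metis
  obtain Pi r1 r2 where pi: "is_pullback C tZ tY Pi r1 r2"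
    using fc tZ tY unfolding finitely_complete_def by metis
  note pip = pb_props[OF pi]
  have c1: "cmp C tZ (idn C Z) = cmp C tY f"
    by (rule termu[of _ Z]) (use tZ tY hf Y_def Z_def cs in simp_all)
  obtain uf where uf: "src C uf = Z" "tgt C uf = Pi" "cmp C r1 uf = idn C Z" "cmp C r2 uf = f"
    using pb_ex[OF pi, of "idn C Z" f] c1 tZ tY hf Y_def Z_def cs by auto
  have c2: "cmp C tZ (idn C Z) = cmp C tY g"
    by (rule termu[of _ Z]) (use tZ tY hg ht Y_def Z_def cs in simp_all)
  obtain ug where ug: "src C ug = Z" "tgt C ug = Pi" "cmp C r1 ug = idn C Z" "cmp C r2 ug = g"
    using pb_ex[OF pi, of "idn C Z" g] c2 tZ tY hg ht Y_def Z_def cs by auto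
  obtain E e1 e2 where E: "is_pullback C uf ug E e1 e2"
    using fc uf ug unfolding finitely_complete_def by metis
  note Ep = pb_props[OF E]
  have q1: "cmp C r1 (cmp C uf e1) = cmp C r1 (cmp C ug e2)" using Ep by simp
  have "cmp C r1 (cmp C uf e1) = e1"
    using Ep(2-5) uf pip by (simp add: cat_assoc[OF cat] cat_idl[OF cat])
  moreover have "cmp C r1 (cmp C ug e2) = e2"
    using Ep(2-5) ug pip by (simp add: cat_assoc[OF cat] cat_idl[OF cat])
  ultimately have e12: "e1 = e2" using q1 by simp
  have q2: "cmp C r2 (cmp C uf e1) = cmp C r2 (cmp C ug e2)" using Ep by simp
  have "cmp C r2 (cmp C uf e1) = cmp C f e1"
    using Ep(2-5) uf pip by (simp add: cat_assoc[OF cat])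
  moreover have "cmp C r2 (cmp C ug e2) = cmp C g e2"
    using Ep(2-5) ug pip by (simp add: cat_assoc[OF cat])
  ultimately have fe: "cmp C f e1 = cmp C g e1" using q2 e12 by simp
  have mono: "is_mono C e1"
    unfolding is_mono_def
  proof (intro allI impI)
    fix x y assume h: "tgt C x = src C e1 \<and> tgt C y = src C e1 \<and> src C x = src C y \<and> cmp C e1 x = cmp C e1 y"
    show "x = y"
      by (rule pb_uniq[OF cat E, of x "src C x"]) (use h e12 Ep in simp_all)
  qed
  have fact: "\<exists>u. hom C u (src C h) (src C e1) \<and> cmp C e1 u = h"
    if hh: "tgt C h = Z" "cmp C f h = cmp C g h" for h
  proof -
    have "cmp C uf h = cmp C ug h"
    proof (rule pb_uniq[OF cat pi, of _ "src C h"])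
      show "cmp C r1 (cmp C uf h) = cmp C r1 (cmp C ug h)"
        using uf ug hh pip by (simp add: cat_assoc[OF cat] cat_idl[OF cat])
      show "cmp C r2 (cmp C uf h) = cmp C r2 (cmp C ug h)"
        using uf ug hh pip by (simp add: cat_assoc[OF cat])
    qed (use uf ug hh cs in simp_all)
    then obtain u where "src C u = src C h" "tgt C u = E" "cmp C e1 u = h"
      using pb_ex[OF E, of h h] uf ug hh by auto
    thus ?thesis using Ep unfolding hom_def by auto
  qed
  obtain a' where a': "hom C a' (src C a) (src C e1)" "cmp C e1 a' = a"
    using fact[of a] ea Z_def by blast
  obtain b' where b': "hom C b' (src C b) (src C e1)" "cmp C e1 b' = b"
    using fact[of b] eb tb by blast
  have te: "tgt C e1 = tgt C a" using Ep(3) uf(1) Z_def by simp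
  have "iso C e1"
    using jee mono a' b' te unfolding jointly_extremally_epic_def by blast
  then obtain k where k: "hom C k (tgt C e1) (src C e1)" "cmp C e1 k = idn C (tgt C e1)"
    unfolding iso_def by blast
  from te have te: "tgt C e1 = Z" using Z_def by simp
  have "f = cmp C f (cmp C e1 k)" using k te hf Z_def by (simp add: cat_idr[OF cat])
  also have "\<dots> = cmp C (cmp C f e1) k" by (rule cat_assoc[OF cat]) (use k te hf Z_def in \<open>simp_all add: hom_def\<close>)
  also have "\<dots> = cmp C (cmp C g e1) k" using fe by simp
  also have "\<dots> = cmp C g (cmp C e1 k)" by (rule cat_assoc[OF cat, symmetric]) (use k te hg Z_def in \<open>simp_all add: hom_def\<close>)
  also have "\<dots> = g" using k te hg Z_def by (simp add: cat_idr[OF cat])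
  finally show ?thesis .
qed

lemma cat_assoc_r:
  assumes "is_category C" "tgt C f = src C g" "tgt C g = src C h"
  shows "cmp C (cmp C h g) f = cmp C h (cmp C g f)"
  using cat_assoc[OF assms] by simp

lemma ext_eq:
  assumes "is_category C" "cmp C A B = R" "tgt C B = src C A" "tgt C x = src C B"
  shows "cmp C A (cmp C B x) = cmp C R x"
  using cat_assoc[OF assms(1) assms(4) assms(3)] assms(2) by simp

theorem proposition2p4:
  fixes C :: "('o, 'a) category" and \<Sigma> :: "('a \<times> 'a) set"
    and X0 X1 X2 :: 'o and d0 d1 s0 pi1 pi2 i1 i2 :: 'a
  assumes cat: "is_category C"
    and fc: "finitely_complete C"
    and fib: "fibrational C \<Sigma>"
    and malt: "sigma_maltsev C \<Sigma>"
    and rg: "reflexive_graph C X0 X1 d0 d1 s0"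
    and sig: "(d0, s0) \<in> \<Sigma>"
    and pb: "is_pullback C d1 d0 X2 pi1 pi2"
    and i1: "hom C i1 X1 X2" "cmp C pi1 i1 = idn C X1" "cmp C pi2 i1 = cmp C s0 d1"
    and i2: "hom C i2 X1 X2" "cmp C pi1 i2 = cmp C s0 d0" "cmp C pi2 i2 = idn C X1"
  shows "(\<forall>m m'. hom C m X2 X1 \<and> cmp C m i1 = idn C X1 \<and> cmp C m i2 = idn C X1 \<and>
                 hom C m' X2 X1 \<and> cmp C m' i1 = idn C X1 \<and> cmp C m' i2 = idn C X1
                 \<longrightarrow> m = m')
       \<and> (\<forall>m. hom C m X2 X1 \<and> cmp C m i1 = idn C X1 \<and> cmp C m i2 = idn C X1
                 \<longrightarrow> internal_category C X0 X1 d0 d1 s0 X2 pi1 pi2 m)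
       \<and> (\<forall>m m'. internal_category C X0 X1 d0 d1 s0 X2 pi1 pi2 m \<and>
                 internal_category C X0 X1 d0 d1 s0 X2 pi1 pi2 m' \<longrightarrow> m = m')"
proof -
  have ty: "src C d0 = X1" "tgt C d0 = X0" "src C d1 = X1" "tgt C d1 = X0"
    "src C s0 = X0" "tgt C s0 = X1" and rgeq: "cmp C d0 s0 = idn C X0" "cmp C d1 s0 = idn C X0"
    using rg unfolding reflexive_graph_def hom_def by auto
  note pp = pb_props[OF pb]
  have ty2: "src C pi1 = X2" "tgt C pi1 = X1" "src C pi2 = X2" "tgt C pi2 = X1"
    "src C i1 = X1" "tgt C i1 = X2" "src C i2 = X1" "tgt C i2 = X2"
    using pp ty i1 i2 unfolding hom_def by auto
  note T = ty ty2 cat_src_id[OF cat] cat_tgt_id[OF cat] cat_src_cmp[OF cat] cat_tgt_cmp[OF cat]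
  note S0 = T cat_assoc_r[OF cat] cat_idl[OF cat] cat_idr[OF cat]
  note E0 = rgeq i1(2,3) i2(2,3) pp(6)
  note S1 = S0 E0 ext_eq[OF cat rgeq(1)] ext_eq[OF cat rgeq(2)] ext_eq[OF cat i1(2)]
     ext_eq[OF cat i1(3)] ext_eq[OF cat i2(2)] ext_eq[OF cat i2(3)] ext_eq[OF cat pp(6)]
  have jee: "jointly_extremally_epic C i1 i2"
    using malt[unfolded sigma_maltsev_def, rule_format, of d0 s0 d1 s0 X2 pi1 pi2 i1 i2]
      sig pb i1 i2 ty rgeq pp unfolding split_epi_def hom_def by auto
  have uniq: "m = m'" if "hom C m X2 X1" "cmp C m i1 = idn C X1" "cmp C m i2 = idn C X1"
      "hom C m' X2 X1" "cmp C m' i1 = idn C X1" "cmp C m' i2 = idn C X1" for m m'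
    by (rule jee_cancel[OF cat fc jee]) (use that ty2 in \<open>simp_all add: hom_def\<close>)
  have intc: "internal_category C X0 X1 d0 d1 s0 X2 pi1 pi2 m"
    if hm: "hom C m X2 X1" "cmp C m i1 = idn C X1" "cmp C m i2 = idn C X1" for m
  proof -
    have tym: "src C m = X2" "tgt C m = X1" using hm unfolding hom_def by auto
    note S2 = S1 tym hm(2,3) ext_eq[OF cat hm(2)] ext_eq[OF cat hm(3)]
    have d0m: "cmp C d0 m = cmp C d0 pi1"
      by (rule jee_cancel[OF cat fc jee]) (simp_all add: S2)
    have d1m: "cmp C d1 m = cmp C d1 pi2"
      by (rule jee_cancel[OF cat fc jee]) (simp_all add: S2)
    note S3 = S2 d0m d1m ext_eq[OF cat d0m] ext_eq[OF cat d1m]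
    have assoc: "cmp C m a = cmp C m b"
      if X3: "is_pullback C pi2 pi1 X3 q1 q2" and ha: "hom C a X3 X2" "cmp C pi1 a = cmp C m q1"
        "cmp C pi2 a = cmp C pi2 q2" and hb: "hom C b X3 X2" "cmp C pi1 b = cmp C pi1 q1"
        "cmp C pi2 b = cmp C m q2" for X3 q1 q2 a b
    proof -
      note qp = pb_props[OF X3]
      have tyq: "src C q1 = X3" "tgt C q1 = X2" "src C q2 = X3" "tgt C q2 = X2"
        "src C a = X3" "tgt C a = X2" "src C b = X3" "tgt C b = X2"
        using qp ha hb ty2 unfolding hom_def by auto
      have sig1: "(pi1, i1) \<in> \<Sigma>"
        using fib[unfolded fibrational_def, THEN conjunct2, THEN conjunct2, rule_format,
            of d0 s0 d1 X2 pi1 pi2 i1] sig pb i1 ty pp unfolding hom_def by auto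
      obtain s' where s': "src C s' = X2" "tgt C s' = X3" "cmp C q1 s' = idn C X2"
          "cmp C q2 s' = cmp C i1 pi2"
        by (rule pb_ex[OF X3, of "idn C X2" "cmp C i1 pi2"]) (simp_all add: S3 tyq)
      obtain tb where tb: "src C tb = X2" "tgt C tb = X3" "cmp C q1 tb = cmp C i2 pi1"
          "cmp C q2 tb = idn C X2"
        by (rule pb_ex[OF X3, of "cmp C i2 pi1" "idn C X2"]) (simp_all add: S3 tyq)
      have jee2: "jointly_extremally_epic C s' tb"
        using malt[unfolded sigma_maltsev_def, rule_format, of pi1 i1 pi2 i2 X3 q1 q2 s' tb]
          sig1 X3 s' tb ty2 i2 qp unfolding split_epi_def hom_def by auto
      note S4 = S3 tyq s' tb ha(2,3) hb(2,3) ext_eq[OF cat ha(2)] ext_eq[OF cat ha(3)]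
        ext_eq[OF cat hb(2)] ext_eq[OF cat hb(3)] ext_eq[OF cat s'(3)] ext_eq[OF cat s'(4)]
        ext_eq[OF cat tb(3)] ext_eq[OF cat tb(4)]
      have as: "cmp C a s' = cmp C i1 m"
        by (rule pb_uniq[OF cat pb, of _ X2]) (simp_all add: S4)
      have bs: "cmp C b s' = idn C X2"
        by (rule pb_uniq[OF cat pb, of _ X2]) (simp_all add: S4)
      have at: "cmp C a tb = idn C X2"
        by (rule pb_uniq[OF cat pb, of _ X2]) (simp_all add: S4)
      have bt: "cmp C b tb = cmp C i2 m"
        by (rule pb_uniq[OF cat pb, of _ X2]) (simp_all add: S4)
      show ?thesis
        by (rule jee_cancel[OF cat fc jee2])
          (simp_all add: S4 as bs at bt ext_eq[OF cat as] ext_eq[OF cat bs]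
            ext_eq[OF cat at] ext_eq[OF cat bt])
    qed
    show ?thesis
      unfolding internal_category_def
    proof (intro conjI allI impI rg pb hm(1) d0m d1m)
      fix i assume "hom C i X1 X2 \<and> cmp C pi1 i = idn C X1 \<and> cmp C pi2 i = cmp C s0 d1"
      hence "i = i1" using i1 ty2 by - (rule pb_uniq[OF cat pb, of i X1 i1], auto simp: hom_def)
      thus "cmp C m i = idn C X1" using hm by simp
    next
      fix i assume "hom C i X1 X2 \<and> cmp C pi1 i = cmp C s0 d0 \<and> cmp C pi2 i = idn C X1"
      hence "i = i2" using i2 ty2 by - (rule pb_uniq[OF cat pb, of i X1 i2], auto simp: hom_def)
      thus "cmp C m i = idn C X1" using hm by simp
    next
      fix X3 q1 q2 a b
      assume "is_pullback C pi2 pi1 X3 q1 q2 \<and>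
        hom C a X3 X2 \<and> cmp C pi1 a = cmp C m q1 \<and> cmp C pi2 a = cmp C pi2 q2 \<and>
        hom C b X3 X2 \<and> cmp C pi1 b = cmp C pi1 q1 \<and> cmp C pi2 b = cmp C m q2"
      thus "cmp C m a = cmp C m b" using assoc by blast
    qed
  qed
  have p3: "m = m'" if "internal_category C X0 X1 d0 d1 s0 X2 pi1 pi2 m"
      "internal_category C X0 X1 d0 d1 s0 X2 pi1 pi2 m'" for m m'
  proof (rule uniq)
    show "hom C m X2 X1" "hom C m' X2 X1" using that unfolding internal_category_def by auto
    show "cmp C m i1 = idn C X1" "cmp C m' i1 = idn C X1"
      using that i1 unfolding internal_category_def by blast+
    show "cmp C m i2 = idn C X1" "cmp C m' i2 = idn C X1"
      using that i2 unfolding internal_category_def by blast+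
  qed
  show ?thesis using uniq intc p3 by blast
qed

end
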